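(* Let $\mathcal P=\big((\{a\}\to\{a\searrow b\})^r_{<5}\big)^{lr}$, a class of continuous maps of topological spaces. Then: (1) a continuous map between normal Hausdorff ($T_4$) spaces lies in $\mathcal P$ iff it is proper (i.e. it is closed and the preimage of every point is compact); (2) a Hausdorff space $K$ is compact iff the map $K\to\{*\}$ lies in $\mathcal P$.
   Context: For morphisms $f:A\to B$ and $g:X\to Y$ in a category, write $f\rightthreetimes g$ ("$f$ has the left lifting property with respect to $g$") if for all morphisms $i:A\to X$, $j:B\to Y$ with $g\circ i=j\circ f$ there exists a morphism $h:B\to X$ with $h\circ f=i$ and $g\circ h=j$. For a class $C$ of morphisms, $C^l=\{f:\ f\rightthreetimes g\text{ for all }g\in C\}$, $C^r=\{g:\ f\rightthreetimes g\text{ for all }f\in C\}$, $C^{lr}=(C^l)^r$. For a class $C$ of continuous maps, $C_{<n}$ denotes the subclass of those maps whose domain and codomain are finite spaces with fewer than $n$ points. $\{a\searrow b\}$ is the Sierpiński space with open sets $\emptyset,\{a\},\{a,b\}$, and $\{a\}\to\{a\searrow b\}$ is the inclusion of the open point $a$; $\{*\}$ is the one-point space. *)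

theory Defs
  imports "HOL-Analysis.Analysis"
begin

text \<open>A morphism of Top is represented by a triple (X, Y, f) of topologies and a
  function, required to be a continuous map X to Y; equations between maps are
  only required on the underlying topspaces.\<close>

definition lifts ::
  "'a topology \<Rightarrow> 'b topology \<Rightarrow> ('a \<Rightarrow> 'b) \<Rightarrow>
   'c topology \<Rightarrow> 'd topology \<Rightarrow> ('c \<Rightarrow> 'd) \<Rightarrow> bool" where
  "lifts X Y f Z W g \<longleftrightarrow>
     (\<forall>i j. continuous_map X Z i \<and> continuous_map Y W j \<and>
            (\<forall>x\<in>topspace X. g (i x) = j (f x)) \<longrightarrow>
        (\<exists>h. continuous_map Y Z h \<and>
             (\<forall>x\<in>topspace X. h (f x) = i x) \<and>
             (\<forall>y\<in>topspace Y. g (h y) = j y)))"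

text \<open>The Sierpinski space {a \<searrow> b} with a = 0 (open point) and b = 1.\<close>
definition sierpinski :: "nat topology" where
  "sierpinski = topology (\<lambda>U. U = {} \<or> U = {0} \<or> U = {0, 1})"

definition point_a :: "nat topology" where
  "point_a = discrete_topology {0}"

text \<open>Membership in the class (({a} \<rightarrow> {a \<searrow> b})^r)_{<5}. Finite spaces with fewer
  than 5 points are represented (up to homeomorphism) by topologies on nat.\<close>
definition in_Cr5 :: "nat topology \<Rightarrow> nat topology \<Rightarrow> (nat \<Rightarrow> nat) \<Rightarrow> bool" where
  "in_Cr5 Z W g \<longleftrightarrow>
     continuous_map Z W g \<and>
     finite (topspace Z) \<and> card (topspace Z) < 5 \<and>
     finite (topspace W) \<and> card (topspace W) < 5 \<and>
     lifts point_a sierpinski id Z W g"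

definition in_Cr5l :: "'c topology \<Rightarrow> 'c topology \<Rightarrow> ('c \<Rightarrow> 'c) \<Rightarrow> bool" where
  "in_Cr5l A B u \<longleftrightarrow>
     continuous_map A B u \<and>
     (\<forall>Z W g. in_Cr5 Z W g \<longrightarrow> lifts A B u Z W g)"

text \<open>Membership in P = ((...)^r_{<5})^{lr}, where the maps of the left class
  that are tested against range over spaces carried by the type 'c.\<close>
definition in_P :: "'c itself \<Rightarrow> 'a topology \<Rightarrow> 'b topology \<Rightarrow> ('a \<Rightarrow> 'b) \<Rightarrow> bool" where
  "in_P (_ :: 'c itself) X Y f \<longleftrightarrow>
     continuous_map X Y f \<and>
     (\<forall>(A :: 'c topology) B u. in_Cr5l A B u \<longrightarrow> lifts A B u X Y f)"

definition star_space :: "unit topology" where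
  "star_space = discrete_topology UNIV"

end

theory Submission
  imports Defs
begin


lemma topspace_topology_eq:
  assumes "istopology L" "L T" "\<And>W. L W \<Longrightarrow> W \<subseteq> T"
  shows "topspace (topology L) = T"
proof -
  have o: "openin (topology L) = L" using assms(1) by (rule topology_inverse')
  show ?thesis unfolding topspace_def o
  proof (rule antisym)
    show "\<Union>{S. L S} \<subseteq> T" using assms(3) by blast
    show "T \<subseteq> \<Union>{S. L S}" using assms(2) by blast
  qed
qed

lemma istopology_sier: "istopology (\<lambda>U::nat set. U = {} \<or> U = {0} \<or> U = {0, 1})"
  unfolding istopology_def
proof (intro conjI allI impI)
  fix K :: "nat set set" assume K: "\<forall>k\<in>K. k = {} \<or> k = {0} \<or> k = {0, 1}"
  have k01: "k \<subseteq> {0,1}" if "k \<in> K" for k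
  proof -
    have "k = {} \<or> k = {0} \<or> k = {0, 1}" using K that by blast
    then show ?thesis by (elim disjE) simp_all
  qed
  show "\<Union>K = {} \<or> \<Union>K = {0} \<or> \<Union>K = {0, 1}"
  proof (cases "{0,1} \<in> K")
    case True
    have "\<Union>K \<subseteq> {0,1}" using k01 by (rule Union_least)
    moreover have "{0,1} \<subseteq> \<Union>K" using True by (rule Union_upper)
    ultimately show ?thesis by (intro disjI2) (rule antisym)
  next
    case False
    have k0: "k \<subseteq> {0}" if "k \<in> K" for k
    proof -
      have "k = {} \<or> k = {0} \<or> k = {0, 1}" using K that by blast
      moreover have "k \<noteq> {0,1}" using that False by blast
      ultimately have "k = {} \<or> k = {0}" by blast
      then show ?thesis by (elim disjE) simp_all
    qed
    show ?thesis
    proof (cases "{0} \<in> K")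
      case True
      have "\<Union>K \<subseteq> {0}" using k0 by (rule Union_least)
      moreover have "{0} \<subseteq> \<Union>K" using True by (rule Union_upper)
      ultimately show ?thesis by (intro disjI2 disjI1) (rule antisym)
    next
      case F2: False
      have "k = {}" if "k \<in> K" for k
      proof -
        have "k = {} \<or> k = {0} \<or> k = {0, 1}" using K that by blast
        moreover have "k \<noteq> {0,1}" "k \<noteq> {0}" using that False F2 by blast+
        ultimately show "k = {}" by blast
      qed
      then have "\<Union>K = {}" by blast
      then show ?thesis by (rule disjI1)
    qed
  qed
next
  fix S T :: "nat set"
  assume "S = {} \<or> S = {0} \<or> S = {0, 1}" "T = {} \<or> T = {0} \<or> T = {0, 1}"
  then show "S \<inter> T = {} \<or> S \<inter> T = {0} \<or> S \<inter> T = {0, 1}" by auto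
qed

lemma openin_sier: "openin sierpinski U \<longleftrightarrow> U = {} \<or> U = {0} \<or> U = {0, 1}"
  unfolding sierpinski_def using istopology_sier by (simp only: topology_inverse')

lemma topspace_sier: "topspace sierpinski = {0, 1}"
  unfolding sierpinski_def by (rule topspace_topology_eq[OF istopology_sier]) (simp, blast)

lemma topspace_point_a: "topspace point_a = {0}"
  unfolding point_a_def by simp


lemma lifts_gen_use:
  assumes L: "lifts point_a sierpinski id Z W g"
    and z: "z \<in> topspace Z" and w: "w \<in> topspace W"
    and gz: "g z \<in> topspace W"
    and cl: "\<And>V. openin W V \<Longrightarrow> w \<in> V \<Longrightarrow> g z \<in> V"
  shows "\<exists>z1 \<in> topspace Z. g z1 = w \<and> (\<forall>Q. openin Z Q \<and> z1 \<in> Q \<longrightarrow> z \<in> Q)"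
proof -
  define j :: "nat \<Rightarrow> 'b" where "j n = (if n = 0 then g z else w)" for n
  have ci: "continuous_map point_a Z (\<lambda>_. z)" using z by simp
  have cj: "continuous_map sierpinski W j"
    unfolding continuous_map_def
  proof (intro conjI allI impI)
    show "j \<in> topspace sierpinski \<rightarrow> topspace W" using gz w by (auto simp: topspace_sier j_def)
    fix V assume V: "openin W V"
    have "{x \<in> topspace sierpinski. j x \<in> V} = (if w \<in> V then {0,1} else if g z \<in> V then {0} else {})"
      using cl[OF V] by (auto simp: topspace_sier j_def)
    then show "openin sierpinski {x \<in> topspace sierpinski. j x \<in> V}"
      by (simp add: openin_sier)
  qed
  have comm: "\<forall>x\<in>topspace point_a. g z = j (id x)" by (simp add: topspace_point_a j_def)
  obtain h where h: "continuous_map sierpinski Z h" "\<forall>x\<in>topspace point_a. h (id x) = z"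
      "\<forall>y\<in>topspace sierpinski. g (h y) = j y"
    using L[unfolded lifts_def, rule_format, OF conjI[OF ci conjI[OF cj comm]]] by blast
  have h0: "h 0 = z" using h(2) by (simp add: topspace_point_a)
  have h1: "g (h 1) = w" using h(3) by (simp add: topspace_sier j_def)
  have h1Z: "h 1 \<in> topspace Z" using h(1) by (auto simp: continuous_map_def topspace_sier)
  have "z \<in> Q" if "openin Z Q" "h 1 \<in> Q" for Q
  proof -
    have "openin sierpinski {x \<in> topspace sierpinski. h x \<in> Q}"
      using h(1) that(1) by (simp add: continuous_map_def)
    moreover have "1 \<in> {x \<in> topspace sierpinski. h x \<in> Q}" using that(2) by (simp add: topspace_sier)
    ultimately have "{x \<in> topspace sierpinski. h x \<in> Q} = {0,1}"
      unfolding openin_sier by blast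
    then show ?thesis using h0 by blast
  qed
  then show ?thesis using h1 h1Z by blast
qed



definition fip :: "'a set \<Rightarrow> 'a set set \<Rightarrow> bool" where
  "fip S G \<longleftrightarrow> (\<forall>H. finite H \<and> H \<subseteq> G \<longrightarrow> S \<inter> \<Inter>H \<noteq> {})"

definition ultra :: "'a set \<Rightarrow> 'a set set \<Rightarrow> bool" where
  "ultra S U \<longleftrightarrow> (\<forall>A\<in>U. A \<subseteq> S) \<and> S \<in> U \<and> {} \<notin> U \<and>
     (\<forall>A\<in>U. \<forall>B\<in>U. A \<inter> B \<in> U) \<and> (\<forall>A\<in>U. \<forall>B. A \<subseteq> B \<and> B \<subseteq> S \<longrightarrow> B \<in> U) \<and>
     (\<forall>A. A \<subseteq> S \<longrightarrow> A \<in> U \<or> S - A \<in> U)"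

lemma fip_insert:
  assumes "\<And>H. finite H \<Longrightarrow> H \<subseteq> M \<Longrightarrow> S \<inter> A \<inter> \<Inter>H \<noteq> {}"
  shows "fip S (insert A M)"
  unfolding fip_def
proof (intro allI impI)
  fix H assume H: "finite H \<and> H \<subseteq> insert A M"
  have "S \<inter> A \<inter> \<Inter>(H - {A}) \<subseteq> S \<inter> \<Inter>H" by blast
  moreover have "finite (H - {A})" using H by simp
  moreover have "H - {A} \<subseteq> M" using H by blast
  ultimately have "S \<inter> A \<inter> \<Inter>(H - {A}) \<subseteq> S \<inter> \<Inter>H \<and> S \<inter> A \<inter> \<Inter>(H - {A}) \<noteq> {}"
    using assms by blast
  then show "S \<inter> \<Inter>H \<noteq> {}" by blast
qed

lemma chain_finite_bound:
  assumes "finite H" "H \<subseteq> \<Union>C" "C \<noteq> {}" "chain\<^sub>\<subseteq> C"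
  shows "\<exists>G\<in>C. H \<subseteq> G"
  using assms
proof (induction H rule: finite_induct)
  case empty
  then obtain G where "G \<in> C" by blast
  then show ?case by blast
next
  case (insert x H)
  have "H \<subseteq> \<Union>C" using insert.prems(1) by blast
  then have "\<exists>G\<in>C. H \<subseteq> G" using insert.prems(2,3) by (rule insert.IH)
  then obtain G1 where G1: "G1 \<in> C" "H \<subseteq> G1" by blast
  have "x \<in> \<Union>C" using insert.prems(1) by blast
  then obtain G2 where G2: "G2 \<in> C" "x \<in> G2" by blast
  have "G1 \<subseteq> G2 \<or> G2 \<subseteq> G1" using insert.prems(3) G1(1) G2(1) unfolding chain_subset_def by blast
  then show ?case
  proof
    assume "G1 \<subseteq> G2" then show ?case using G1 G2 by blast
  next
    assume "G2 \<subseteq> G1" then show ?case using G1 G2 by blast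
  qed
qed

lemma ultra_exists:
  assumes F: "F \<subseteq> Pow S" "fip S F"
  shows "\<exists>U. ultra S U \<and> F \<subseteq> U"
proof -
  define P where "P = {G. F \<subseteq> G \<and> G \<subseteq> Pow S \<and> fip S G}"
  have "\<forall>C\<in>chains P. \<exists>U\<in>P. \<forall>X\<in>C. X \<subseteq> U"
  proof
    fix C assume C: "C \<in> chains P"
    let ?C = "insert F C"
    have CP: "C \<subseteq> P" and chC: "chain\<^sub>\<subseteq> C" using C unfolding chains_def by auto
    have FG: "F \<subseteq> G" if "G \<in> C" for G using that CP unfolding P_def by blast
    have ch: "chain\<^sub>\<subseteq> ?C" using chC FG unfolding chain_subset_def by blast
    have FCP: "F \<union> \<Union>C \<in> P"
      unfolding P_def
    proof (intro CollectI conjI)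
      show "F \<subseteq> F \<union> \<Union>C" by blast
      show "F \<union> \<Union>C \<subseteq> Pow S" using CP F unfolding P_def by blast
      show "fip S (F \<union> \<Union>C)" unfolding fip_def
      proof (intro allI impI)
        fix H assume H: "finite H \<and> H \<subseteq> F \<union> \<Union>C"
        then have HC: "H \<subseteq> \<Union>?C" by blast
        have "\<exists>G\<in>?C. H \<subseteq> G"
        proof (rule chain_finite_bound)
          show "finite H" using H by blast
          show "H \<subseteq> \<Union>?C" by (rule HC)
          show "?C \<noteq> {}" by simp
          show "chain\<^sub>\<subseteq> ?C" by (rule ch)
        qed
        then obtain G where "G \<in> ?C" "H \<subseteq> G" by blast
        moreover have "fip S G" if "G \<in> ?C" for G using that CP F unfolding P_def by blast
        ultimately show "S \<inter> \<Inter>H \<noteq> {}" using H unfolding fip_def by blast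
      qed
    qed
    show "\<exists>U\<in>P. \<forall>X\<in>C. X \<subseteq> U"
    proof (rule bexI)
      show "\<forall>X\<in>C. X \<subseteq> F \<union> \<Union>C" by blast
      show "F \<union> \<Union>C \<in> P" by (rule FCP)
    qed
  qed
  then obtain M where M: "M \<in> P" and max: "\<And>X. X \<in> P \<Longrightarrow> M \<subseteq> X \<Longrightarrow> X = M"
    using Zorn_Lemma2[of P] by blast
  have MS: "M \<subseteq> Pow S" and Mf: "fip S M" and FM: "F \<subseteq> M" using M unfolding P_def by auto
  have add: "A \<in> M" if "A \<subseteq> S" "fip S (insert A M)" for A
  proof -
    have "insert A M \<in> P" using that M unfolding P_def by blast
    then have "insert A M = M" using max by blast
    then show ?thesis by blast
  qed
  have "ultra S M"
    unfolding ultra_def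
  proof (intro conjI ballI allI impI)
    show "A \<subseteq> S" if "A \<in> M" for A using that MS by blast
    show "S \<in> M"
    proof (rule add)
      show "fip S (insert S M)"
      proof (rule fip_insert)
        fix H assume "finite H" "H \<subseteq> M"
        then have "S \<inter> \<Inter>H \<noteq> {}" using Mf unfolding fip_def by blast
        then show "S \<inter> S \<inter> \<Inter>H \<noteq> {}" by simp
      qed
    qed simp
    show "{} \<notin> M"
    proof
      assume "{} \<in> M"
      then have "finite {{}} \<and> {{}} \<subseteq> M" by simp
      then have "S \<inter> \<Inter>{{}} \<noteq> {}" using Mf unfolding fip_def by blast
      then show False by simp
    qed
    show "A \<inter> B \<in> M" if "A \<in> M" "B \<in> M" for A B
    proof (rule add)
      show "A \<inter> B \<subseteq> S" using that MS by blast
      show "fip S (insert (A \<inter> B) M)"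
      proof (rule fip_insert)
        fix H assume "finite H" "H \<subseteq> M"
        then have "finite (insert A (insert B H)) \<and> insert A (insert B H) \<subseteq> M" using that by simp
        then have "S \<inter> \<Inter>(insert A (insert B H)) \<noteq> {}" using Mf unfolding fip_def by blast
        then show "S \<inter> (A \<inter> B) \<inter> \<Inter>H \<noteq> {}" by auto
      qed
    qed
    show "B \<in> M" if "A \<in> M" "A \<subseteq> B \<and> B \<subseteq> S" for A B
    proof (rule add)
      show "B \<subseteq> S" using that by blast
      show "fip S (insert B M)"
      proof (rule fip_insert)
        fix H assume "finite H" "H \<subseteq> M"
        then have "finite (insert A H) \<and> insert A H \<subseteq> M" using that by simp
        then have "S \<inter> \<Inter>(insert A H) \<noteq> {}" using Mf unfolding fip_def by blast
        then show "S \<inter> B \<inter> \<Inter>H \<noteq> {}" using that by auto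
      qed
    qed
    show "A \<in> M \<or> S - A \<in> M" if "A \<subseteq> S" for A
    proof (rule ccontr)
      assume n: "\<not> (A \<in> M \<or> S - A \<in> M)"
      have "\<not> fip S (insert A M)" using n add that by blast
      then obtain H1 where H1: "finite H1" "H1 \<subseteq> M" "S \<inter> A \<inter> \<Inter>H1 = {}"
        using fip_insert[of M S A] by blast
      have "\<not> fip S (insert (S - A) M)" using n add by blast
      then obtain H2 where H2: "finite H2" "H2 \<subseteq> M" "S \<inter> (S - A) \<inter> \<Inter>H2 = {}"
        using fip_insert[of M S "S - A"] by blast
      have "finite (H1 \<union> H2) \<and> H1 \<union> H2 \<subseteq> M" using H1 H2 by simp
      then have "S \<inter> \<Inter>(H1 \<union> H2) \<noteq> {}" using Mf unfolding fip_def by blast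
      then show False using H1 H2 by blast
    qed
  qed
  then show ?thesis using FM by blast
qed




lemma ultra_finite_image:
  assumes U: "ultra S U" and Z: "finite Z" and im: "\<And>s. s \<in> S \<Longrightarrow> \<phi> s \<in> Z"
  shows "\<exists>z\<in>Z. {s\<in>S. \<phi> s = z} \<in> U"
proof (rule ccontr)
  assume n: "\<not> (\<exists>z\<in>Z. {s\<in>S. \<phi> s = z} \<in> U)"
  have Uc: "S - A \<in> U" if "A \<subseteq> S" "A \<notin> U" for A using U that unfolding ultra_def by blast
  have Ui: "A \<inter> B \<in> U" if "A \<in> U" "B \<in> U" for A B using U that unfolding ultra_def by blast
  have SU: "S \<in> U" using U unfolding ultra_def by blast
  have "finite Z' \<Longrightarrow> Z' \<subseteq> Z \<Longrightarrow> {s\<in>S. \<phi> s \<notin> Z'} \<in> U" for Z'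
  proof (induction Z' rule: finite_induct)
    case empty
    then show ?case using SU by simp
  next
    case (insert z Z')
    have "Z' \<subseteq> Z" using insert.prems by simp
    then have "{s\<in>S. \<phi> s \<notin> Z'} \<in> U" by (rule insert.IH)
    moreover have "z \<in> Z" using insert.prems by simp
    then have "{s\<in>S. \<phi> s = z} \<notin> U" using n by blast
    then have "S - {s\<in>S. \<phi> s = z} \<in> U" by (intro Uc) auto
    ultimately have "{s\<in>S. \<phi> s \<notin> Z'} \<inter> (S - {s\<in>S. \<phi> s = z}) \<in> U" by (rule Ui)
    moreover have "{s\<in>S. \<phi> s \<notin> Z'} \<inter> (S - {s\<in>S. \<phi> s = z}) = {s\<in>S. \<phi> s \<notin> insert z Z'}"
      by blast
    ultimately show ?case by simp
  qed
  from this[OF Z order.refl] have "{s\<in>S. \<phi> s \<notin> Z} \<in> U" .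
  moreover have "{s\<in>S. \<phi> s \<notin> Z} = {}" using im by blast
  ultimately show False using U unfolding ultra_def by simp
qed

lemma fb_fip:
  assumes sub: "F \<subseteq> Pow S" and ne: "F \<noteq> {}" and cl: "\<And>A B. A \<in> F \<Longrightarrow> B \<in> F \<Longrightarrow> A \<inter> B \<in> F"
    and em: "{} \<notin> F"
  shows "fip S F"
proof -
  have "finite H \<Longrightarrow> H \<subseteq> F \<Longrightarrow> \<exists>A\<in>F. A \<subseteq> S \<inter> \<Inter>H" for H
  proof (induction H rule: finite_induct)
    case empty
    obtain A where A: "A \<in> F" using ne by blast
    then have "A \<subseteq> S" using sub by blast
    then have "A \<subseteq> S \<inter> \<Inter>{}" by simp
    then show ?case using A by blast
  next
    case (insert B H)
    have "H \<subseteq> F" using insert.prems by simp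
    then have "\<exists>A\<in>F. A \<subseteq> S \<inter> \<Inter>H" by (rule insert.IH)
    then obtain A where A: "A \<in> F" "A \<subseteq> S \<inter> \<Inter>H" by blast
    have "B \<in> F" using insert.prems by blast
    then have "A \<inter> B \<in> F" using A(1) cl by blast
    moreover have "A \<inter> B \<subseteq> S \<inter> \<Inter>(insert B H)" using A(2) by blast
    ultimately show ?case by blast
  qed
  then show ?thesis unfolding fip_def
  proof (intro allI impI)
    fix H assume r: "\<And>H. finite H \<Longrightarrow> H \<subseteq> F \<Longrightarrow> \<exists>A\<in>F. A \<subseteq> S \<inter> \<Inter>H"
      and H: "finite H \<and> H \<subseteq> F"
    then obtain A where A: "A \<in> F" "A \<subseteq> S \<inter> \<Inter>H" by blast
    have "A \<noteq> {}" using A(1) em by blast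
    then show "S \<inter> \<Inter>H \<noteq> {}" using A(2) by blast
  qed
qed


lemma cmap_in: "continuous_map X Y f \<Longrightarrow> x \<in> topspace X \<Longrightarrow> f x \<in> topspace Y"
  using continuous_map_image_subset_topspace by blast

lemma lift_ultra:
  fixes X :: "'a topology" and Y :: "'b topology" and f :: "'a \<Rightarrow> 'b"
  assumes P: "in_P TYPE(('a + 'e) set set) X Y f"
    and U: "ultra (topspace X) U" and y: "y \<in> topspace Y"
    and conv: "\<And>V. openin Y V \<Longrightarrow> y \<in> V \<Longrightarrow> {x \<in> topspace X. f x \<in> V} \<in> U"
  shows "\<exists>x \<in> topspace X. f x = y \<and> (\<forall>N. openin X N \<and> x \<in> N \<longrightarrow> N \<in> U)"
proof -
  have cf: "continuous_map X Y f" using P unfolding in_P_def by blast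
  have Plift: "\<And>(A :: ('a + 'e) set set topology) B u. in_Cr5l A B u \<Longrightarrow> lifts A B u X Y f"
    using P unfolding in_P_def by blast
  define emb :: "'a \<Rightarrow> ('a + 'e) set set" where "emb x = {{Inl x}}" for x
  define inf :: "('a + 'e) set set" where "inf = {}"
  define S where "S = emb ` topspace X"
  define T where "T = insert inf S"
  define pre where "pre W = {x \<in> topspace X. emb x \<in> W}" for W
  define L where "L W \<longleftrightarrow> W \<subseteq> T \<and> openin X (pre W) \<and> (inf \<in> W \<longrightarrow> pre W \<in> U)" for W
  have inj: "inj emb" unfolding inj_def emb_def by simp
  have ne: "emb x \<noteq> inf" for x unfolding emb_def inf_def by simp
  have infS: "inf \<notin> S" using ne unfolding S_def by blast
  have Usub: "A \<subseteq> topspace X" if "A \<in> U" for A using U that unfolding ultra_def by blast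
  have Utop: "topspace X \<in> U" using U unfolding ultra_def by blast
  have Uint: "A \<inter> B \<in> U" if "A \<in> U" "B \<in> U" for A B using U that unfolding ultra_def by blast
  have Uup: "B \<in> U" if "A \<in> U" "A \<subseteq> B" "B \<subseteq> topspace X" for A B
    using U that unfolding ultra_def by blast
  have Ue: "{} \<notin> U" using U unfolding ultra_def by blast
  have preInt: "pre (W1 \<inter> W2) = pre W1 \<inter> pre W2" for W1 W2 unfolding pre_def by blast
  have preUn: "pre (\<Union>K) = \<Union>(pre ` K)" for K unfolding pre_def by blast
  have preSub: "pre W \<subseteq> topspace X" for W unfolding pre_def by blast
  have istop: "istopology L"
    unfolding istopology_def
  proof (intro conjI allI impI)
    fix W1 W2 assume L1: "L W1" and L2: "L W2"
    have "W1 \<inter> W2 \<subseteq> T" using L1 unfolding L_def by blast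
    moreover have "openin X (pre (W1 \<inter> W2))" unfolding preInt
      using L1 L2 unfolding L_def by (intro openin_Int) blast+
    moreover have "pre (W1 \<inter> W2) \<in> U" if "inf \<in> W1 \<inter> W2"
    proof -
      have "pre W1 \<in> U" "pre W2 \<in> U" using that L1 L2 unfolding L_def by blast+
      then show ?thesis unfolding preInt by (rule Uint)
    qed
    ultimately show "L (W1 \<inter> W2)" unfolding L_def by blast
  next
    fix K assume K: "\<forall>W\<in>K. L W"
    have "\<Union>K \<subseteq> T" using K unfolding L_def by blast
    moreover have "openin X (pre (\<Union>K))" unfolding preUn
    proof (rule openin_Union)
      show "\<And>Q. Q \<in> pre ` K \<Longrightarrow> openin X Q" using K unfolding L_def by blast
    qed
    moreover have "pre (\<Union>K) \<in> U" if a: "inf \<in> \<Union>K"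
    proof -
      obtain W where W: "W \<in> K" "inf \<in> W" using a by blast
      then have "pre W \<in> U" using K unfolding L_def by blast
      moreover have "pre W \<subseteq> pre (\<Union>K)" using W(1) unfolding pre_def by blast
      ultimately show ?thesis using preSub by (rule Uup)
    qed
    ultimately show "L (\<Union>K)" unfolding L_def by blast
  qed
  define B where "B = topology L"
  have openB: "openin B W \<longleftrightarrow> L W" for W unfolding B_def using istop by simp
  have preT: "pre T = topspace X" unfolding pre_def T_def S_def by blast
  have LT: "L T" unfolding L_def preT using Utop by simp
  have topB: "topspace B = T" unfolding B_def
    by (rule topspace_topology_eq[OF istop LT]) (simp add: L_def)
  have preS: "pre S = topspace X" unfolding pre_def S_def by blast
  have LS: "L S" unfolding L_def preS using infS by (simp add: T_def) blast
  have SopenB: "openin B S" using LS openB by blast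
  define A where "A = subtopology B S"
  have topA: "topspace A = S" unfolding A_def topspace_subtopology topB T_def by blast
  define i where "i = inv emb"
  have ie: "i (emb x) = x" for x using inj unfolding i_def by simp
  define j where "j w = (if w = inf then y else f (i w))" for w
  have pre_emb: "pre (emb ` Q) = Q" if "Q \<subseteq> topspace X" for Q
    using that inj unfolding pre_def by (auto simp: inj_image_mem_iff)
  have ci: "continuous_map A X i"
    unfolding continuous_map_def
  proof (intro conjI allI impI)
    show "i \<in> topspace A \<rightarrow> topspace X" unfolding topA S_def using ie by auto
    fix Q assume Q: "openin X Q"
    have Qs: "Q \<subseteq> topspace X" using Q by (rule openin_subset)
    have eq: "{w \<in> topspace A. i w \<in> Q} = emb ` Q" unfolding topA S_def using ie Qs by auto
    have "L (emb ` Q)" unfolding L_def pre_emb[OF Qs] using Q Qs ne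
      by (auto simp: T_def S_def)
    then have "openin B (emb ` Q)" using openB by blast
    moreover have "emb ` Q = emb ` Q \<inter> S" using Qs unfolding S_def by blast
    ultimately have "openin A (emb ` Q)" unfolding A_def openin_subtopology by blast
    then show "openin A {w \<in> topspace A. i w \<in> Q}" unfolding eq .
  qed
  have cj: "continuous_map B Y j"
    unfolding continuous_map_def
  proof (intro conjI allI impI)
    have "f x \<in> topspace Y" if "x \<in> topspace X" for x using cf that
      by (rule cmap_in)
    then show "j \<in> topspace B \<rightarrow> topspace Y" unfolding topB T_def S_def j_def using ie y ne
      by auto
    fix V assume V: "openin Y V"
    have pe: "pre {w \<in> topspace B. j w \<in> V} = {x \<in> topspace X. f x \<in> V}"
      unfolding pre_def topB T_def S_def j_def using ie ne by auto
    have "L {w \<in> topspace B. j w \<in> V}"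
      unfolding L_def pe
    proof (intro conjI impI)
      show "{w \<in> topspace B. j w \<in> V} \<subseteq> T" using topB by blast
      show "openin X {x \<in> topspace X. f x \<in> V}" using cf V by (rule openin_continuous_map_preimage)
      assume "inf \<in> {w \<in> topspace B. j w \<in> V}"
      then have "y \<in> V" unfolding j_def by simp
      then show "{x \<in> topspace X. f x \<in> V} \<in> U" using V conv by blast
    qed
    then show "openin B {w \<in> topspace B. j w \<in> V}" using openB by blast
  qed
  have comm: "\<forall>w\<in>topspace A. f (i w) = j (id w)"
    unfolding topA j_def using infS by auto
  have cu: "continuous_map A B id" unfolding A_def by (rule continuous_map_id_subt)
  have lifts_all: "in_Cr5l A B id"
    unfolding in_Cr5l_def
  proof (intro conjI allI impI)
    show "continuous_map A B id" by (rule cu)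
    fix Z W g assume g: "in_Cr5 Z W g"
    have cg: "continuous_map Z W g" and fZ: "finite (topspace Z)"
      and Lg: "lifts point_a sierpinski id Z W g"
      using g unfolding in_Cr5_def by blast+
    show "lifts A B id Z W g" unfolding lifts_def
    proof (intro allI impI)
      fix i' j' assume H: "continuous_map A Z i' \<and> continuous_map B W j' \<and> (\<forall>x\<in>topspace A. g (i' x) = j' (id x))"
      have ci': "continuous_map A Z i'" and cj': "continuous_map B W j'"
        and cm: "\<And>x. x \<in> topspace A \<Longrightarrow> g (i' x) = j' x" using H by auto
      have embA: "emb x \<in> topspace A" if "x \<in> topspace X" for x using that unfolding topA S_def by blast
      have i'Z: "i' w \<in> topspace Z" if "w \<in> topspace A" for w
        using ci' that by (rule cmap_in)
      obtain z0 where z0: "z0 \<in> topspace Z" and E: "{x \<in> topspace X. i' (emb x) = z0} \<in> U"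
        using ultra_finite_image[OF U fZ, of "\<lambda>x. i' (emb x)"] i'Z embA by blast
      define E where "E = {x \<in> topspace X. i' (emb x) = z0}"
      have EU: "E \<in> U" using E unfolding E_def .
      have infT: "inf \<in> topspace B" unfolding topB T_def by blast
      have winf: "j' inf \<in> topspace W" using cj' infT by (rule cmap_in)
      have gz0: "g z0 \<in> topspace W" using cg z0 by (rule cmap_in)
      have cl: "g z0 \<in> V" if V: "openin W V" "j' inf \<in> V" for V
      proof -
        have "openin B {w \<in> topspace B. j' w \<in> V}" using cj' V(1) by (rule openin_continuous_map_preimage)
        then have "L {w \<in> topspace B. j' w \<in> V}" using openB by blast
        moreover have "inf \<in> {w \<in> topspace B. j' w \<in> V}" using infT V(2) by blast
        ultimately have "pre {w \<in> topspace B. j' w \<in> V} \<in> U" unfolding L_def by blast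
        then have "pre {w \<in> topspace B. j' w \<in> V} \<inter> E \<in> U" using EU by (rule Uint)
        then have "pre {w \<in> topspace B. j' w \<in> V} \<inter> E \<noteq> {}" using Ue by metis
        then obtain x where x: "x \<in> topspace X" "j' (emb x) \<in> V" "i' (emb x) = z0"
          unfolding pre_def E_def by blast
        have "j' (emb x) = g z0" using cm[OF embA[OF x(1)]] x(3) by simp
        then show ?thesis using x(2) by simp
      qed
      obtain z1 where z1: "z1 \<in> topspace Z" "g z1 = j' inf"
        and z1o: "\<And>Q. openin Z Q \<Longrightarrow> z1 \<in> Q \<Longrightarrow> z0 \<in> Q"
        using lifts_gen_use[OF Lg z0 winf gz0 cl] by blast
      define h where "h w = (if w = inf then z1 else i' w)" for w
      have ch: "continuous_map B Z h"
        unfolding continuous_map_def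
      proof (intro conjI allI impI)
        show "h \<in> topspace B \<rightarrow> topspace Z" unfolding topB T_def h_def
          using z1(1) i'Z topA by auto
        fix Q assume Q: "openin Z Q"
        define R where "R = {w \<in> topspace A. i' w \<in> Q}"
        have "openin A R" unfolding R_def using ci' Q by (rule openin_continuous_map_preimage)
        then have "openin B R" unfolding A_def using SopenB by (rule openin_trans_full)
        then have LR: "L R" using openB by blast
        have pe: "pre {w \<in> topspace B. h w \<in> Q} = pre R"
          unfolding pre_def R_def topB topA T_def S_def h_def using ne by auto
        have "L {w \<in> topspace B. h w \<in> Q}"
          unfolding L_def pe
        proof (intro conjI impI)
          show "{w \<in> topspace B. h w \<in> Q} \<subseteq> T" using topB by blast
          show "openin X (pre R)" using LR unfolding L_def by blast
          assume "inf \<in> {w \<in> topspace B. h w \<in> Q}"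
          then have "z1 \<in> Q" unfolding h_def by simp
          then have "z0 \<in> Q" using z1o Q by blast
          have Esub: "E \<subseteq> pre R"
          proof
            fix x assume "x \<in> E"
            then have x: "x \<in> topspace X" "i' (emb x) = z0" unfolding E_def by auto
            then have "emb x \<in> R" unfolding R_def using embA \<open>z0 \<in> Q\<close> by simp
            then show "x \<in> pre R" unfolding pre_def using x by simp
          qed
          show "pre R \<in> U" by (rule Uup[OF EU Esub preSub])
        qed
        then show "openin B {w \<in> topspace B. h w \<in> Q}" using openB by blast
      qed
      have h1: "\<forall>x\<in>topspace A. h (id x) = i' x" unfolding topA h_def using infS by auto
      have h2: "\<forall>w\<in>topspace B. g (h w) = j' w"
      proof
        fix w assume w: "w \<in> topspace B"
        show "g (h w) = j' w"
        proof (cases "w = inf")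
          case True then show ?thesis using z1(2) unfolding h_def by simp
        next
          case False
          then have "w \<in> topspace A" using w unfolding topB T_def topA by blast
          then show ?thesis using cm False unfolding h_def by simp
        qed
      qed
      show "\<exists>h. continuous_map B Z h \<and> (\<forall>x\<in>topspace A. h (id x) = i' x) \<and> (\<forall>y\<in>topspace B. g (h y) = j' y)"
        using ch h1 h2 by blast
    qed
  qed
  have "lifts A B id X Y f" using Plift[OF lifts_all] .
  then obtain h where h: "continuous_map B X h" "\<forall>w\<in>topspace A. h (id w) = i w"
      "\<forall>w\<in>topspace B. f (h w) = j w"
    unfolding lifts_def using ci cj comm by blast
  have infT: "inf \<in> topspace B" unfolding topB T_def by blast
  have xX: "h inf \<in> topspace X" using h(1) infT by (rule cmap_in)
  have fx: "f (h inf) = y" using h(3) infT unfolding j_def by simp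
  have "N \<in> U" if N: "openin X N" "h inf \<in> N" for N
  proof -
    have "openin B {w \<in> topspace B. h w \<in> N}" using h(1) N(1) by (rule openin_continuous_map_preimage)
    then have "L {w \<in> topspace B. h w \<in> N}" using openB by blast
    moreover have "inf \<in> {w \<in> topspace B. h w \<in> N}" using infT N(2) by blast
    ultimately have "pre {w \<in> topspace B. h w \<in> N} \<in> U" unfolding L_def by blast
    moreover have "pre {w \<in> topspace B. h w \<in> N} = N"
    proof -
      have Ns: "N \<subseteq> topspace X" using N(1) by (rule openin_subset)
      have "h (emb x) = x" if "x \<in> topspace X" for x
        using h(2) ie that unfolding topA S_def by auto
      then show ?thesis unfolding pre_def topB T_def S_def using Ns by auto
    qed
    ultimately show ?thesis by simp
  qed
  then show ?thesis using xX fx by blast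
qed



definition ultra_lim :: "'a topology \<Rightarrow> 'b topology \<Rightarrow> ('a \<Rightarrow> 'b) \<Rightarrow> bool" where
  "ultra_lim X Y f \<longleftrightarrow> (\<forall>U y. ultra (topspace X) U \<and> y \<in> topspace Y \<and>
      (\<forall>V. openin Y V \<and> y \<in> V \<longrightarrow> {x \<in> topspace X. f x \<in> V} \<in> U) \<longrightarrow>
      (\<exists>x\<in>topspace X. f x = y \<and> (\<forall>N. openin X N \<and> x \<in> N \<longrightarrow> N \<in> U)))"

lemma in_P_ultra_lim:
  fixes X :: "'a topology" and Y :: "'b topology"
  assumes "in_P TYPE(('a + 'e) set set) X Y f"
  shows "ultra_lim X Y f"
  unfolding ultra_lim_def
proof (intro allI impI)
  fix U y assume H: "ultra (topspace X) U \<and> y \<in> topspace Y \<and>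
      (\<forall>V. openin Y V \<and> y \<in> V \<longrightarrow> {x \<in> topspace X. f x \<in> V} \<in> U)"
  show "\<exists>x\<in>topspace X. f x = y \<and> (\<forall>N. openin X N \<and> x \<in> N \<longrightarrow> N \<in> U)"
  proof (rule lift_ultra[OF assms])
    show "ultra (topspace X) U" using H by blast
    show "y \<in> topspace Y" using H by blast
    show "\<And>V. openin Y V \<Longrightarrow> y \<in> V \<Longrightarrow> {x \<in> topspace X. f x \<in> V} \<in> U" using H by blast
  qed
qed

lemma ultra_lim_proper:
  assumes cf: "continuous_map X Y f" and ul: "ultra_lim X Y f"
  shows "proper_map X Y f"
  unfolding proper_map_def
proof (intro conjI ballI)
  have ulr: "\<exists>x\<in>topspace X. f x = y \<and> (\<forall>N. openin X N \<and> x \<in> N \<longrightarrow> N \<in> U)"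
    if "ultra (topspace X) U" "y \<in> topspace Y"
      "\<And>V. openin Y V \<Longrightarrow> y \<in> V \<Longrightarrow> {x \<in> topspace X. f x \<in> V} \<in> U" for U y
    using ul that unfolding ultra_lim_def by blast
  have fin: "f x \<in> topspace Y" if "x \<in> topspace X" for x using cf that by (rule cmap_in)
  show "closed_map X Y f"
    unfolding closed_map_def
  proof (intro allI impI)
    fix C assume C: "closedin X C"
    have Cs: "C \<subseteq> topspace X" using C by (rule closedin_subset)
    have fCs: "f ` C \<subseteq> topspace Y" using Cs fin by blast
    have "Y closure_of (f ` C) \<subseteq> f ` C"
    proof
      fix y assume y: "y \<in> Y closure_of (f ` C)"
      have yY: "y \<in> topspace Y" using y by (simp add: in_closure_of)
      define F where "F = {C \<inter> {x \<in> topspace X. f x \<in> V} | V. openin Y V \<and> y \<in> V}"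
      have fipF: "fip (topspace X) F"
      proof (rule fb_fip)
        show "F \<subseteq> Pow (topspace X)" unfolding F_def using Cs by blast
        have "C \<inter> {x \<in> topspace X. f x \<in> topspace Y} \<in> F" unfolding F_def using yY by blast
        then show "F \<noteq> {}" by blast
        fix A1 A2 assume "A1 \<in> F" "A2 \<in> F"
        then obtain V1 V2 where V: "openin Y V1" "y \<in> V1" "A1 = C \<inter> {x \<in> topspace X. f x \<in> V1}"
          "openin Y V2" "y \<in> V2" "A2 = C \<inter> {x \<in> topspace X. f x \<in> V2}" unfolding F_def by blast
        have "A1 \<inter> A2 = C \<inter> {x \<in> topspace X. f x \<in> V1 \<inter> V2}" using V by blast
        moreover have "openin Y (V1 \<inter> V2)" using V by blast
        ultimately show "A1 \<inter> A2 \<in> F" unfolding F_def using V by blast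
      next
        show "{} \<notin> F"
        proof
          assume "{} \<in> F"
          then obtain V where V: "openin Y V" "y \<in> V" "C \<inter> {x \<in> topspace X. f x \<in> V} = {}"
            unfolding F_def by blast
          then obtain y' where "y' \<in> f ` C" "y' \<in> V" using y unfolding in_closure_of by blast
          then show False using V Cs by blast
        qed
      qed
      have FP: "F \<subseteq> Pow (topspace X)" unfolding F_def using Cs by blast
      obtain U where U: "ultra (topspace X) U" "F \<subseteq> U" using ultra_exists[OF FP fipF] by blast
      have Uup: "B \<in> U" if "A \<in> U" "A \<subseteq> B" "B \<subseteq> topspace X" for A B
        using U(1) that unfolding ultra_def by blast
      have "{x \<in> topspace X. f x \<in> V} \<in> U" if V: "openin Y V" "y \<in> V" for V
      proof -
        have "C \<inter> {x \<in> topspace X. f x \<in> V} \<in> U" using U(2) V unfolding F_def by blast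
        moreover have "C \<inter> {x \<in> topspace X. f x \<in> V} \<subseteq> {x \<in> topspace X. f x \<in> V}" by blast
        ultimately show ?thesis by (rule Uup) blast
      qed
      then obtain x where x: "x \<in> topspace X" "f x = y" and xl: "\<And>N. openin X N \<Longrightarrow> x \<in> N \<Longrightarrow> N \<in> U"
        using ulr[OF U(1) yY] by blast
      have "x \<in> C"
      proof (rule ccontr)
        assume "x \<notin> C"
        then have "topspace X - C \<in> U" using xl C x(1) by blast
        moreover have "C \<in> U"
        proof -
          have "C \<inter> {x \<in> topspace X. f x \<in> topspace Y} \<in> U" using U(2) yY unfolding F_def by blast
          moreover have "C \<inter> {x \<in> topspace X. f x \<in> topspace Y} = C" using Cs fin by blast
          ultimately show ?thesis by simp
        qed
        ultimately have "(topspace X - C) \<inter> C \<in> U" using U(1) unfolding ultra_def by blast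
        moreover have "(topspace X - C) \<inter> C = {}" by blast
        ultimately have "{} \<in> U" by simp
        then show False using U(1) unfolding ultra_def by blast
      qed
      then show "y \<in> f ` C" using x by blast
    qed
    then show "closedin Y (f ` C)" using fCs closure_of_subset_eq by blast
  qed
next
  fix y assume yY: "y \<in> topspace Y"
  have ulr: "\<exists>x\<in>topspace X. f x = y \<and> (\<forall>N. openin X N \<and> x \<in> N \<longrightarrow> N \<in> U)"
    if "ultra (topspace X) U" "\<And>V. openin Y V \<Longrightarrow> y \<in> V \<Longrightarrow> {x \<in> topspace X. f x \<in> V} \<in> U" for U
    using ul that yY unfolding ultra_lim_def by blast
  define K where "K = {x \<in> topspace X. f x = y}"
  have Ks: "K \<subseteq> topspace X" unfolding K_def by blast
  show "compactin X {x \<in> topspace X. f x = y}"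
    unfolding K_def[symmetric] compactin_fip
  proof (intro conjI allI impI)
    show "K \<subseteq> topspace X" by (rule Ks)
    fix \<C> assume H: "(\<forall>C\<in>\<C>. closedin X C) \<and> (\<forall>\<F>. finite \<F> \<and> \<F> \<subseteq> \<C> \<longrightarrow> K \<inter> \<Inter>\<F> \<noteq> {})"
    define F where "F = {K \<inter> \<Inter>G | G. finite G \<and> G \<subseteq> \<C>}"
    have KF: "K \<in> F" unfolding F_def by (rule CollectI, rule exI[of _ "{}"]) simp
    have CF: "K \<inter> C \<in> F" if "C \<in> \<C>" for C unfolding F_def
      by (rule CollectI, rule exI[of _ "{C}"]) (use that in simp)
    have FP: "F \<subseteq> Pow (topspace X)" unfolding F_def using Ks by blast
    have fipF: "fip (topspace X) F"
    proof (rule fb_fip)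
      show "F \<subseteq> Pow (topspace X)" by (rule FP)
      show "F \<noteq> {}" using KF by blast
      fix A1 A2 assume "A1 \<in> F" "A2 \<in> F"
      then obtain G1 G2 where G: "finite G1" "G1 \<subseteq> \<C>" "A1 = K \<inter> \<Inter>G1"
        "finite G2" "G2 \<subseteq> \<C>" "A2 = K \<inter> \<Inter>G2" unfolding F_def by blast
      have "A1 \<inter> A2 = K \<inter> \<Inter>(G1 \<union> G2)" using G by blast
      moreover have "finite (G1 \<union> G2)" "G1 \<union> G2 \<subseteq> \<C>" using G by auto
      ultimately show "A1 \<inter> A2 \<in> F" unfolding F_def by blast
    next
      show "{} \<notin> F"
      proof
        assume "{} \<in> F"
        then obtain G where "finite G" "G \<subseteq> \<C>" "{} = K \<inter> \<Inter>G" unfolding F_def by blast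
        then show False using H by metis
      qed
    qed
    obtain U where U: "ultra (topspace X) U" "F \<subseteq> U" using ultra_exists[OF FP fipF] by blast
    have KU: "K \<in> U" using U(2) KF by blast
    have "{x \<in> topspace X. f x \<in> V} \<in> U" if V: "openin Y V" "y \<in> V" for V
    proof -
      have "K \<subseteq> {x \<in> topspace X. f x \<in> V}" unfolding K_def using V(2) by blast
      then show ?thesis using KU U(1) unfolding ultra_def by blast
    qed
    then obtain x where x: "x \<in> topspace X" "f x = y" and xl: "\<And>N. openin X N \<Longrightarrow> x \<in> N \<Longrightarrow> N \<in> U"
      using ulr[OF U(1)] by blast
    have "x \<in> C" if C: "C \<in> \<C>" for C
    proof (rule ccontr)
      assume "x \<notin> C"
      moreover have "closedin X C" using H C by blast
      ultimately have "topspace X - C \<in> U" using xl x(1) by blast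
      moreover have "K \<inter> C \<in> U" using U(2) CF[OF C] by blast
      ultimately have "(topspace X - C) \<inter> (K \<inter> C) \<in> U" using U(1) unfolding ultra_def by blast
      moreover have "(topspace X - C) \<inter> (K \<inter> C) = {}" by blast
      ultimately have "{} \<in> U" by simp
      then show False using U(1) unfolding ultra_def by blast
    qed
    moreover have "x \<in> K" unfolding K_def using x by blast
    ultimately show "K \<inter> \<Inter>\<C> \<noteq> {}" by blast
  qed
qed



definition Z3 :: "nat topology" where
  "Z3 = topology (\<lambda>U. U \<subseteq> {0,1,2} \<and> (U \<noteq> {} \<longrightarrow> 0 \<in> U))"

lemma istopology_Z3: "istopology (\<lambda>U::nat set. U \<subseteq> {0,1,2} \<and> (U \<noteq> {} \<longrightarrow> 0 \<in> U))"
  unfolding istopology_def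
proof (intro conjI allI impI)
  fix S T :: "nat set"
  assume S: "S \<subseteq> {0,1,2} \<and> (S \<noteq> {} \<longrightarrow> 0 \<in> S)" and T: "T \<subseteq> {0,1,2} \<and> (T \<noteq> {} \<longrightarrow> 0 \<in> T)"
  show "S \<inter> T \<subseteq> {0,1,2}" using S by blast
  show "0 \<in> S \<inter> T" if "S \<inter> T \<noteq> {}"
  proof -
    have "S \<noteq> {}" "T \<noteq> {}" using that by blast+
    then show ?thesis using S T by blast
  qed
next
  fix K :: "nat set set" assume K: "\<forall>k\<in>K. k \<subseteq> {0,1,2} \<and> (k \<noteq> {} \<longrightarrow> 0 \<in> k)"
  show "\<Union>K \<subseteq> {0,1,2}" using K by blast
  show "0 \<in> \<Union>K" if "\<Union>K \<noteq> {}"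
  proof -
    obtain k where "k \<in> K" "k \<noteq> {}" using \<open>\<Union>K \<noteq> {}\<close> by blast
    then show ?thesis using K by blast
  qed
qed

lemma openin_Z3: "openin Z3 U \<longleftrightarrow> U \<subseteq> {0,1,2} \<and> (U \<noteq> {} \<longrightarrow> 0 \<in> U)"
  unfolding Z3_def using istopology_Z3 by (simp only: topology_inverse')

lemma topspace_Z3: "topspace Z3 = {0,1,2}"
  unfolding Z3_def by (rule topspace_topology_eq[OF istopology_Z3]) simp_all

lemma topspace_D1: "topspace (discrete_topology {0::nat}) = {0}" by simp

lemma in_Cr5_Z3: "in_Cr5 Z3 (discrete_topology {0}) (\<lambda>_. 0)"
  unfolding in_Cr5_def
proof (intro conjI)
  show "continuous_map Z3 (discrete_topology {0::nat}) (\<lambda>_. 0)" by simp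
  show "finite (topspace Z3)" by (simp add: topspace_Z3)
  show "card (topspace Z3) < 5" by (simp add: topspace_Z3)
  show "finite (topspace (discrete_topology {0::nat}))" by simp
  show "card (topspace (discrete_topology {0::nat})) < 5" by simp
  show "lifts point_a sierpinski id Z3 (discrete_topology {0::nat}) (\<lambda>_. 0)"
    unfolding lifts_def
  proof (intro allI impI)
    fix i j :: "nat \<Rightarrow> nat"
    assume H: "continuous_map point_a Z3 i \<and> continuous_map sierpinski (discrete_topology {0}) j \<and>
       (\<forall>x\<in>topspace point_a. 0 = j (id x))"
    have i0: "i 0 \<in> topspace Z3" using H cmap_in[of point_a Z3 i 0] by (simp add: topspace_point_a)
    have jv: "j y = 0" if "y \<in> topspace sierpinski" for y
      using H cmap_in[of sierpinski "discrete_topology {0}" j y] that by simp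
    show "\<exists>h. continuous_map sierpinski Z3 h \<and> (\<forall>x\<in>topspace point_a. h (id x) = i x) \<and>
       (\<forall>y\<in>topspace sierpinski. 0 = j y)"
      by (rule exI[of _ "\<lambda>_. i 0"]) (simp add: i0 topspace_point_a jv)
  qed
qed

lemma in_Cr5_dense: "in_Cr5 (discrete_topology {0}) sierpinski (\<lambda>_. 1)"
  unfolding in_Cr5_def
proof (intro conjI)
  show "continuous_map (discrete_topology {0::nat}) sierpinski (\<lambda>_. 1)" by (simp add: topspace_sier)
  show "finite (topspace (discrete_topology {0::nat}))" by simp
  show "card (topspace (discrete_topology {0::nat})) < 5" by simp
  show "finite (topspace sierpinski)" by (simp add: topspace_sier)
  show "card (topspace sierpinski) < 5" by (simp add: topspace_sier)
  show "lifts point_a sierpinski id (discrete_topology {0::nat}) sierpinski (\<lambda>_. 1)"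
    unfolding lifts_def
  proof (intro allI impI)
    fix i j :: "nat \<Rightarrow> nat"
    assume H: "continuous_map point_a (discrete_topology {0}) i \<and> continuous_map sierpinski sierpinski j \<and>
       (\<forall>x\<in>topspace point_a. 1 = j (id x))"
    have j0: "j 0 = 1" using H by (simp add: topspace_point_a)
    have cj: "continuous_map sierpinski sierpinski j" using H by blast
    have i0: "i 0 = 0" using H cmap_in[of point_a "discrete_topology {0}" i 0] by (simp add: topspace_point_a)
    have j1: "j 1 = 1"
    proof (rule ccontr)
      assume n: "j 1 \<noteq> 1"
      have "j 1 \<in> {0,1}" using cmap_in[OF cj, of 1] by (simp add: topspace_sier)
      then have j1: "j 1 = 0" using n by blast
      have "openin sierpinski {x \<in> topspace sierpinski. j x \<in> {0}}"
        using cj by (rule openin_continuous_map_preimage) (simp add: openin_sier)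
      moreover have "{x \<in> topspace sierpinski. j x \<in> {0}} = {1}"
        using j0 j1 by (auto simp: topspace_sier)
      moreover have "{1::nat} \<noteq> {}" "{1::nat} \<noteq> {0}" "{1::nat} \<noteq> {0,1}" by auto
      ultimately show False unfolding openin_sier by metis
    qed
    have jv: "1 = j y" if "y \<in> topspace sierpinski" for y
    proof -
      have "y = 0 \<or> y = 1" using that by (simp add: topspace_sier)
      then show ?thesis using j0 j1 by auto
    qed
    show "\<exists>h. continuous_map sierpinski (discrete_topology {0}) h \<and> (\<forall>x\<in>topspace point_a. h (id x) = i x) \<and>
       (\<forall>y\<in>topspace sierpinski. 1 = j y)"
      using jv by (intro exI[of _ "\<lambda>_. 0"] conjI) (simp_all add: i0 topspace_point_a)
  qed
qed

lemma Cr5l_dense: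
  assumes u: "in_Cr5l A B u" and U: "openin B U" "b \<in> U"
  shows "\<exists>a\<in>topspace A. u a \<in> U"
proof (rule ccontr)
  assume n: "\<not> (\<exists>a\<in>topspace A. u a \<in> U)"
  have L: "lifts A B u (discrete_topology {0::nat}) sierpinski (\<lambda>_. 1)"
    using u in_Cr5_dense unfolding in_Cr5l_def by blast
  define j where "j b = (if b \<in> U then 0 else 1::nat)" for b
  have Us: "U \<subseteq> topspace B" using U(1) by (rule openin_subset)
  have ci: "continuous_map A (discrete_topology {0::nat}) (\<lambda>_. 0::nat)" by simp
  have cj: "continuous_map B sierpinski j"
    unfolding continuous_map_def
  proof (intro conjI allI impI)
    show "j \<in> topspace B \<rightarrow> topspace sierpinski" unfolding j_def by (simp add: topspace_sier)
    fix V assume "openin sierpinski V"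
    then have "V = {} \<or> V = {0} \<or> V = {0,1}" by (simp add: openin_sier)
    then show "openin B {x \<in> topspace B. j x \<in> V}"
    proof (elim disjE)
      assume "V = {}" then show ?thesis by simp
    next
      assume "V = {0}"
      then have "{x \<in> topspace B. j x \<in> V} = U" using Us unfolding j_def by auto
      then show ?thesis using U(1) by simp
    next
      assume "V = {0,1}"
      then have "{x \<in> topspace B. j x \<in> V} = topspace B" unfolding j_def by auto
      then show ?thesis by simp
    qed
  qed
  have comm: "\<forall>x\<in>topspace A. (\<lambda>_. 1::nat) ((\<lambda>_. 0::nat) x) = j (u x)"
    using n unfolding j_def by auto
  obtain h where h: "\<forall>y\<in>topspace B. (\<lambda>_. 1::nat) (h y) = j y"
    using L[unfolded lifts_def, rule_format, OF conjI[OF ci conjI[OF cj comm]]] by blast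
  have "b \<in> topspace B" using U Us by blast
  then have "j b = 1" using h by simp
  then show False using U(2) unfolding j_def by simp
qed

lemma Cr5l_sep:
  assumes u: "in_Cr5l A B u" and C1: "closedin A C1" and C2: "closedin A C2"
    and dis: "C1 \<inter> C2 = {}" and b: "b \<in> topspace B"
  shows "\<exists>U. openin B U \<and> b \<in> U \<and> ((\<forall>a\<in>C1. u a \<notin> U) \<or> (\<forall>a\<in>C2. u a \<notin> U))"
proof -
  have L: "lifts A B u Z3 (discrete_topology {0::nat}) (\<lambda>_. 0)"
    using u in_Cr5_Z3 unfolding in_Cr5l_def by blast
  have cu: "continuous_map A B u" using u unfolding in_Cr5l_def by blast
  have C1s: "C1 \<subseteq> topspace A" using C1 by (rule closedin_subset)
  have C2s: "C2 \<subseteq> topspace A" using C2 by (rule closedin_subset)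
  define i where "i a = (if a \<in> C1 then 1 else if a \<in> C2 then 2 else 0::nat)" for a
  have ci: "continuous_map A Z3 i"
    unfolding continuous_map_def
  proof (intro conjI allI impI)
    show "i \<in> topspace A \<rightarrow> topspace Z3" unfolding i_def by (simp add: topspace_Z3)
    fix V assume "openin Z3 V"
    then have V: "V \<subseteq> {0,1,2}" "V \<noteq> {} \<Longrightarrow> 0 \<in> V" by (simp_all add: openin_Z3)
    show "openin A {x \<in> topspace A. i x \<in> V}"
    proof (cases "0 \<in> V")
      case False
      then have "V = {}" using V by blast
      then show ?thesis by simp
    next
      case True
      have eq: "{x \<in> topspace A. i x \<in> V} =
          topspace A - (if 1 \<in> V then {} else C1) - (if 2 \<in> V then {} else C2)"
        using True dis C1s C2s unfolding i_def by auto
      have "closedin A (if 1 \<in> V then {} else C1)" using C1 by simp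
      moreover have "closedin A (if 2 \<in> V then {} else C2)" using C2 by simp
      ultimately show ?thesis unfolding eq by (intro openin_diff openin_topspace)
    qed
  qed
  have cj: "continuous_map B (discrete_topology {0::nat}) (\<lambda>_. 0::nat)" by simp
  have comm: "\<forall>x\<in>topspace A. (\<lambda>_. 0::nat) (i x) = (\<lambda>_. 0::nat) (u x)" by simp
  obtain h where h: "continuous_map B Z3 h" "\<forall>x\<in>topspace A. h (u x) = i x"
    using L[unfolded lifts_def, rule_format, OF conjI[OF ci conjI[OF cj comm]]] by blast
  show ?thesis
  proof (cases "h b = 1")
    case False
    define U where "U = {x \<in> topspace B. h x \<in> {0,2}}"
    have "openin B U" unfolding U_def using h(1) by (rule openin_continuous_map_preimage) (simp add: openin_Z3)
    moreover have "b \<in> U" unfolding U_def using b False cmap_in[OF h(1) b] by (auto simp: topspace_Z3)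
    moreover have "\<forall>a\<in>C1. u a \<notin> U" using h(2) C1s unfolding U_def i_def by auto
    ultimately show ?thesis by blast
  next
    case True
    define U where "U = {x \<in> topspace B. h x \<in> {0,1}}"
    have "openin B U" unfolding U_def using h(1) by (rule openin_continuous_map_preimage) (simp add: openin_Z3)
    moreover have "b \<in> U" unfolding U_def using b True by simp
    moreover have "h (u a) = 2" if a: "a \<in> C2" for a
    proof -
      have "a \<in> topspace A" "a \<notin> C1" using a C2s dis by blast+
      then show ?thesis using h(2) a unfolding i_def by simp
    qed
    then have "\<forall>a\<in>C2. u a \<notin> U" unfolding U_def by auto
    ultimately show ?thesis by blast
  qed
qed



lemma proper_exist:
  assumes pf: "proper_map X Y f" and cj: "continuous_map B Y j"
    and comm: "\<And>a. a \<in> topspace A \<Longrightarrow> f (i a) = j (u a)"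
    and ci: "continuous_map A X i"
    and b: "b \<in> topspace B" and C: "closedin X C"
    and hyp: "\<And>U. openin B U \<Longrightarrow> b \<in> U \<Longrightarrow> i ` {a \<in> topspace A. u a \<in> U} \<inter> C \<noteq> {}"
  shows "\<exists>x\<in>C. f x = j b \<and> (\<forall>U. openin B U \<and> b \<in> U \<longrightarrow> x \<in> X closure_of (i ` {a \<in> topspace A. u a \<in> U} \<inter> C))"
proof (rule ccontr)
  define SU where "SU U = i ` {a \<in> topspace A. u a \<in> U}" for U
  assume "\<not> ?thesis"
  then have nc: "\<And>x. x \<in> C \<Longrightarrow> f x = j b \<Longrightarrow> \<exists>U. openin B U \<and> b \<in> U \<and> x \<notin> X closure_of (SU U \<inter> C)"
    unfolding SU_def by blast
  have Cs: "C \<subseteq> topspace X" using C by (rule closedin_subset)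
  have jb: "j b \<in> topspace Y" using cj b by (rule cmap_in)
  define K where "K = {x \<in> topspace X. f x = j b}"
  have cK: "compactin X K" using pf jb unfolding proper_map_def K_def by blast
  define \<V> where "\<V> = {N. openin X N \<and> (\<exists>U. openin B U \<and> b \<in> U \<and> N \<inter> (SU U \<inter> C) = {})}"
  have cov: "K \<subseteq> \<Union>\<V>"
  proof
    fix x assume x: "x \<in> K"
    then have xX: "x \<in> topspace X" and fx: "f x = j b" unfolding K_def by auto
    show "x \<in> \<Union>\<V>"
    proof (cases "x \<in> C")
      case False
      have "openin X (topspace X - C)" using C by (intro openin_diff) auto
      moreover have "(topspace X - C) \<inter> (SU (topspace B) \<inter> C) = {}" by blast
      ultimately have "topspace X - C \<in> \<V>" unfolding \<V>_def using b by blast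
      then show ?thesis using xX False by blast
    next
      case True
      obtain U where U: "openin B U" "b \<in> U" "x \<notin> X closure_of (SU U \<inter> C)" using nc[OF True fx] by blast
      then obtain T where T: "x \<in> T" "openin X T" "\<forall>y. y \<in> SU U \<inter> C \<longrightarrow> y \<notin> T"
        using xX unfolding in_closure_of by blast
      have "T \<inter> (SU U \<inter> C) = {}" using T(3) by blast
      then have "T \<in> \<V>" unfolding \<V>_def using T(2) U(1,2) by blast
      then show ?thesis using T(1) by blast
    qed
  qed
  have Vo: "\<forall>N\<in>\<V>. openin X N" unfolding \<V>_def by blast
  have "\<forall>\<U>. (\<forall>U\<in>\<U>. openin X U) \<and> K \<subseteq> \<Union>\<U> \<longrightarrow> (\<exists>\<F>. finite \<F> \<and> \<F> \<subseteq> \<U> \<and> K \<subseteq> \<Union>\<F>)"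
    using cK unfolding compactin_def by blast
  then have "\<exists>\<F>. finite \<F> \<and> \<F> \<subseteq> \<V> \<and> K \<subseteq> \<Union>\<F>" using Vo cov by blast
  then obtain \<G> where G: "finite \<G>" "\<G> \<subseteq> \<V>" "K \<subseteq> \<Union>\<G>" by blast
  have "\<forall>N\<in>\<G>. \<exists>U. openin B U \<and> b \<in> U \<and> N \<inter> (SU U \<inter> C) = {}" using G(2) unfolding \<V>_def by blast
  from bchoice[OF this] obtain Uf where Uf': "\<forall>N\<in>\<G>. openin B (Uf N) \<and> b \<in> Uf N \<and> N \<inter> (SU (Uf N) \<inter> C) = {}"
    by blast
  then have Uf: "\<And>N. N \<in> \<G> \<Longrightarrow> openin B (Uf N) \<and> b \<in> Uf N \<and> N \<inter> (SU (Uf N) \<inter> C) = {}"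
    by blast
  define U0 where "U0 = topspace B \<inter> \<Inter>(Uf ` \<G>)"
  have U0o: "openin B U0" unfolding U0_def
    by (rule openin_Int_Inter) (use G(1) Uf in auto)
  have bU0: "b \<in> U0" unfolding U0_def using b Uf by blast
  define N0 where "N0 = \<Union>\<G>"
  have N0o: "openin X N0" unfolding N0_def using G(2) unfolding \<V>_def by blast
  have SUmono: "SU U \<subseteq> SU U'" if "U \<subseteq> U'" for U U' unfolding SU_def using that by blast
  have dis0: "N0 \<inter> (SU U0 \<inter> C) = {}"
  proof -
    have "N \<inter> (SU U0 \<inter> C) = {}" if N: "N \<in> \<G>" for N
    proof -
      have "U0 \<subseteq> Uf N" unfolding U0_def using N by blast
      then have "SU U0 \<subseteq> SU (Uf N)" by (rule SUmono)
      then show ?thesis using Uf[OF N] by blast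
    qed
    then show ?thesis unfolding N0_def by blast
  qed
  have "closedin X (topspace X - N0)" using N0o by (intro closedin_diff) auto
  then have clf: "closedin Y (f ` (topspace X - N0))" using pf unfolding proper_map_def closed_map_def by blast
  have jnot: "j b \<notin> f ` (topspace X - N0)"
  proof
    assume "j b \<in> f ` (topspace X - N0)"
    then obtain x where x: "x \<in> topspace X - N0" "j b = f x" by (rule imageE)
    then have "x \<in> K" "x \<notin> N0" unfolding K_def by auto
    then show False using G(3) unfolding K_def N0_def by blast
  qed
  define V where "V = topspace Y - f ` (topspace X - N0)"
  have Vo: "openin Y V" unfolding V_def using clf by (intro openin_diff) auto
  define U1 where "U1 = U0 \<inter> {b' \<in> topspace B. j b' \<in> V}"
  have U1o: "openin B U1" unfolding U1_def using U0o openin_continuous_map_preimage[OF cj Vo] by (rule openin_Int)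
  have bU1: "b \<in> U1" unfolding U1_def V_def using bU0 b jb jnot by blast
  have "i ` {a \<in> topspace A. u a \<in> U1} \<inter> C \<noteq> {}" using hyp[OF U1o bU1] .
  then obtain a where a: "a \<in> topspace A" "u a \<in> U1" "i a \<in> C" by blast
  have iaX: "i a \<in> topspace X" using ci a(1) by (rule cmap_in)
  have "f (i a) \<in> V" using comm[OF a(1)] a(2) unfolding U1_def by simp
  then have "i a \<in> N0" unfolding V_def using iaX by blast
  moreover have "i a \<in> SU U0" unfolding SU_def using a(1,2) unfolding U1_def by blast
  ultimately show False using dis0 a(3) by blast
qed


lemma regular_shrink:
  assumes reg: "regular_space X" and V: "openin X V" and x: "x \<in> V"
  shows "\<exists>W. openin X W \<and> x \<in> W \<and> X closure_of W \<subseteq> V"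
proof -
  have "closedin X (topspace X - V)" using V by (intro closedin_diff) auto
  moreover have "x \<in> topspace X - (topspace X - V)" using V x openin_subset by blast
  ultimately obtain W where W: "openin X W" "x \<in> W" "disjnt (topspace X - V) (X closure_of W)"
    using reg unfolding regular_space by blast
  have "X closure_of W \<subseteq> V" using W(3) closure_of_subset_topspace[of X W] unfolding disjnt_def by blast
  then show ?thesis using W(1,2) by blast
qed

lemma proper_lifts:
  assumes reg: "regular_space X" and hX: "Hausdorff_space X" and pf: "proper_map X Y f"
    and u: "in_Cr5l A B u" and ci: "continuous_map A X i" and cj: "continuous_map B Y j"
    and comm: "\<And>a. a \<in> topspace A \<Longrightarrow> f (i a) = j (u a)"
  shows "\<exists>h. continuous_map B X h \<and> (\<forall>a\<in>topspace A. h (u a) = i a) \<and> (\<forall>b\<in>topspace B. f (h b) = j b)"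
proof -
  define SU where "SU U = i ` {a \<in> topspace A. u a \<in> U}" for U
  define Clu where "Clu b = {x \<in> topspace X. \<forall>U. openin B U \<and> b \<in> U \<longrightarrow> x \<in> X closure_of SU U}" for b
  have cu: "continuous_map A B u" using u unfolding in_Cr5l_def by blast
  have iX: "i a \<in> topspace X" if "a \<in> topspace A" for a using ci that by (rule cmap_in)
  have SUs: "SU U \<subseteq> topspace X" for U unfolding SU_def using iX by blast
  have ex: "\<exists>x\<in>C. f x = j b \<and> (\<forall>U. openin B U \<and> b \<in> U \<longrightarrow> x \<in> X closure_of (SU U \<inter> C))"
    if "b \<in> topspace B" "closedin X C" "\<And>U. openin B U \<Longrightarrow> b \<in> U \<Longrightarrow> SU U \<inter> C \<noteq> {}" for b C
    using proper_exist[OF pf cj comm ci that(1,2)] that(3) unfolding SU_def by blast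
  have uniq: "x1 = x2" if b: "b \<in> topspace B" and x: "x1 \<in> Clu b" "x2 \<in> Clu b" for b x1 x2
  proof (rule ccontr)
    assume ne: "x1 \<noteq> x2"
    have xX: "x1 \<in> topspace X" "x2 \<in> topspace X" using x unfolding Clu_def by auto
    obtain W1 W2 where W: "openin X W1" "openin X W2" "x1 \<in> W1" "x2 \<in> W2" "disjnt W1 W2"
      using hX xX ne unfolding Hausdorff_space_def by blast
    obtain V1 where V1: "openin X V1" "x1 \<in> V1" "X closure_of V1 \<subseteq> W1" using regular_shrink[OF reg W(1,3)] by blast
    obtain V2 where V2: "openin X V2" "x2 \<in> V2" "X closure_of V2 \<subseteq> W2" using regular_shrink[OF reg W(2,4)] by blast
    define C1 where "C1 = {a \<in> topspace A. i a \<in> X closure_of V1}"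
    define C2 where "C2 = {a \<in> topspace A. i a \<in> X closure_of V2}"
    have C1c: "closedin A C1" unfolding C1_def using ci by (rule closedin_continuous_map_preimage) simp
    have C2c: "closedin A C2" unfolding C2_def using ci by (rule closedin_continuous_map_preimage) simp
    have dis: "C1 \<inter> C2 = {}" unfolding C1_def C2_def using V1(3) V2(3) W(5) unfolding disjnt_def by blast
    obtain U where U: "openin B U" "b \<in> U" "(\<forall>a\<in>C1. u a \<notin> U) \<or> (\<forall>a\<in>C2. u a \<notin> U)"
      using Cr5l_sep[OF u C1c C2c dis b] by blast
    have key: "\<exists>a\<in>topspace A. u a \<in> U \<and> i a \<in> V" if xc: "xx \<in> Clu b" and V: "openin X V" "xx \<in> V" for xx V
    proof -
      have "xx \<in> X closure_of SU U" using xc U(1,2) unfolding Clu_def by blast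
      then obtain y where "y \<in> SU U" "y \<in> V" using V unfolding in_closure_of by blast
      then show ?thesis unfolding SU_def by blast
    qed
    have sub1: "V1 \<subseteq> X closure_of V1" using V1(1) by (intro closure_of_subset openin_subset)
    have sub2: "V2 \<subseteq> X closure_of V2" using V2(1) by (intro closure_of_subset openin_subset)
    obtain a1 where a1: "a1 \<in> topspace A" "u a1 \<in> U" "i a1 \<in> V1" using key[OF x(1) V1(1,2)] by blast
    obtain a2 where a2: "a2 \<in> topspace A" "u a2 \<in> U" "i a2 \<in> V2" using key[OF x(2) V2(1,2)] by blast
    have "a1 \<in> C1" unfolding C1_def using a1 sub1 by blast
    moreover have "a2 \<in> C2" unfolding C2_def using a2 sub2 by blast
    ultimately show False using U(3) a1(2) a2(2) by blast
  qed
  define h where "h b = (SOME x. x \<in> Clu b \<and> f x = j b)" for b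
  have hprop: "h b \<in> Clu b \<and> f (h b) = j b" if b: "b \<in> topspace B" for b
  proof -
    have "\<exists>x\<in>topspace X. f x = j b \<and> (\<forall>U. openin B U \<and> b \<in> U \<longrightarrow> x \<in> X closure_of (SU U \<inter> topspace X))"
    proof (rule ex[OF b])
      show "closedin X (topspace X)" by simp
      fix U assume U: "openin B U" "b \<in> U"
      obtain a where a: "a \<in> topspace A" "u a \<in> U" using Cr5l_dense[OF u U] by blast
      then have "i a \<in> SU U \<inter> topspace X" unfolding SU_def using iX by blast
      then show "SU U \<inter> topspace X \<noteq> {}" by blast
    qed
    then obtain x where "x \<in> topspace X" "f x = j b" "\<forall>U. openin B U \<and> b \<in> U \<longrightarrow> x \<in> X closure_of (SU U \<inter> topspace X)"
      by blast
    moreover have "SU U \<inter> topspace X = SU U" for U using SUs by blast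
    ultimately have "x \<in> Clu b \<and> f x = j b" unfolding Clu_def by simp
    then show ?thesis unfolding h_def by (rule someI)
  qed
  have hX': "h b \<in> topspace X" if "b \<in> topspace B" for b using hprop[OF that] unfolding Clu_def by blast
  have hu: "h (u a) = i a" if a: "a \<in> topspace A" for a
  proof -
    have ub: "u a \<in> topspace B" using cu a by (rule cmap_in)
    have iaX: "i a \<in> topspace X" using ci a by (rule cmap_in)
    have "i a \<in> Clu (u a)" unfolding Clu_def
    proof (intro CollectI conjI allI impI)
      show "i a \<in> topspace X" by (rule iaX)
      fix U assume "openin B U \<and> u a \<in> U"
      then have "i a \<in> SU U" unfolding SU_def using a by blast
      then show "i a \<in> X closure_of SU U" using closure_of_subset[OF SUs] by blast
    qed
    then show ?thesis using uniq[OF ub] hprop[OF ub] by blast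
  qed
  have ch: "continuous_map B X h"
    unfolding continuous_map_def
  proof (intro conjI allI impI)
    show "h \<in> topspace B \<rightarrow> topspace X" using hX' by blast
    fix V assume V: "openin X V"
    show "openin B {b \<in> topspace B. h b \<in> V}"
    proof (rule openin_subopen[THEN iffD2], intro ballI)
      fix b assume "b \<in> {b \<in> topspace B. h b \<in> V}"
      then have b: "b \<in> topspace B" and hbV: "h b \<in> V" by auto
      obtain W where W: "openin X W" "h b \<in> W" "X closure_of W \<subseteq> V" using regular_shrink[OF reg V hbV] by blast
      define C where "C = topspace X - W"
      have Cc: "closedin X C" unfolding C_def using W(1) by (intro closedin_diff) auto
      have "\<exists>U. openin B U \<and> b \<in> U \<and> SU U \<inter> C = {}"
      proof (rule ccontr)
        assume "\<not> ?thesis"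
        then have "\<And>U. openin B U \<Longrightarrow> b \<in> U \<Longrightarrow> SU U \<inter> C \<noteq> {}" by blast
        then obtain x where x: "x \<in> C" "f x = j b" "\<forall>U. openin B U \<and> b \<in> U \<longrightarrow> x \<in> X closure_of (SU U \<inter> C)"
          using ex[OF b Cc] by blast
        have "x \<in> Clu b" unfolding Clu_def
        proof (intro CollectI conjI allI impI)
          show "x \<in> topspace X" using x(1) unfolding C_def by blast
          fix U assume "openin B U \<and> b \<in> U"
          then have "x \<in> X closure_of (SU U \<inter> C)" using x(3) by blast
          moreover have "X closure_of (SU U \<inter> C) \<subseteq> X closure_of SU U" by (rule closure_of_mono) blast
          ultimately show "x \<in> X closure_of SU U" by blast
        qed
        then have "x = h b" using uniq[OF b] hprop[OF b] by blast
        then show False using x(1) W(2) unfolding C_def by blast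
      qed
      then obtain U where U: "openin B U" "b \<in> U" "SU U \<inter> C = {}" by blast
      have Us: "U \<subseteq> topspace B" using U(1) by (rule openin_subset)
      have "U \<subseteq> {b \<in> topspace B. h b \<in> V}"
      proof
        fix b' assume b': "b' \<in> U"
        then have b'B: "b' \<in> topspace B" using Us by blast
        have "h b' \<in> X closure_of SU U" using hprop[OF b'B] U(1) b' unfolding Clu_def by blast
        moreover have "SU U \<subseteq> W" using U(3) SUs unfolding C_def by blast
        then have "X closure_of SU U \<subseteq> X closure_of W" by (rule closure_of_mono)
        ultimately show "b' \<in> {b \<in> topspace B. h b \<in> V}" using W(3) b'B by blast
      qed
      then show "\<exists>T. openin B T \<and> b \<in> T \<and> T \<subseteq> {b \<in> topspace B. h b \<in> V}" using U(1,2) by blast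
    qed
  qed
  show ?thesis using ch hu hprop by blast
qed

lemma proper_in_P:
  assumes reg: "regular_space X" and hX: "Hausdorff_space X" and pf: "proper_map X Y f"
    and cf: "continuous_map X Y f"
  shows "in_P TYPE('c) X Y f"
  unfolding in_P_def
proof (intro conjI allI impI)
  show "continuous_map X Y f" by (rule cf)
  fix A B :: "'c topology" and u assume u: "in_Cr5l A B u"
  show "lifts A B u X Y f"
    unfolding lifts_def
  proof (intro allI impI)
    fix i j assume H: "continuous_map A X i \<and> continuous_map B Y j \<and> (\<forall>x\<in>topspace A. f (i x) = j (u x))"
    show "\<exists>h. continuous_map B X h \<and> (\<forall>x\<in>topspace A. h (u x) = i x) \<and> (\<forall>y\<in>topspace B. f (h y) = j y)"
      using proper_lifts[OF reg hX pf u] H by blast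
  qed
qed



theorem claim1:
  fixes X :: "'a topology" and Y :: "'b topology" and f :: "'a \<Rightarrow> 'b"
    and K :: "'k topology"
  shows
   "(normal_space X \<and> Hausdorff_space X \<and> normal_space Y \<and> Hausdorff_space Y \<and>
      continuous_map X Y f \<longrightarrow>
      (in_P TYPE(('a + 'b + nat) set set) X Y f \<longrightarrow> proper_map X Y f) \<and>
      (proper_map X Y f \<longrightarrow> in_P TYPE('c) X Y f))
    \<and>
    (Hausdorff_space K \<longrightarrow>
      (in_P TYPE(('k + nat) set set) K star_space (\<lambda>_. ()) \<longrightarrow> compact_space K) \<and>
      (compact_space K \<longrightarrow> in_P TYPE('d) K star_space (\<lambda>_. ())))"
proof (intro conjI impI)
  assume H: "normal_space X \<and> Hausdorff_space X \<and> normal_space Y \<and> Hausdorff_space Y \<and> continuous_map X Y f"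
    and P: "in_P TYPE(('a + 'b + nat) set set) X Y f"
  have cf: "continuous_map X Y f" using H by blast
  show "proper_map X Y f" using ultra_lim_proper[OF cf in_P_ultra_lim[OF P]] .
next
  assume H: "normal_space X \<and> Hausdorff_space X \<and> normal_space Y \<and> Hausdorff_space Y \<and> continuous_map X Y f"
    and pf: "proper_map X Y f"
  have cf: "continuous_map X Y f" and hX: "Hausdorff_space X" and nX: "normal_space X" using H by blast+
  have reg: "regular_space X" using normal_t1_imp_regular_space[OF nX Hausdorff_imp_t1_space[OF hX]] .
  show "in_P TYPE('c) X Y f" using proper_in_P[OF reg hX pf cf] .
next
  assume hK: "Hausdorff_space K" and P: "in_P TYPE(('k + nat) set set) K star_space (\<lambda>_. ())"
  have cf: "continuous_map K star_space (\<lambda>_. ())" by (simp add: star_space_def)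
  have pr: "proper_map K star_space (\<lambda>_. ())" using ultra_lim_proper[OF cf in_P_ultra_lim[OF P]] .
  have "() \<in> topspace star_space" by (simp add: star_space_def)
  then have "compactin K {x \<in> topspace K. () = ()}" using pr unfolding proper_map_def by blast
  then show "compact_space K" unfolding compact_space_def by simp
next
  assume hK: "Hausdorff_space K" and cK: "compact_space K"
  have reg: "regular_space K" using compact_Hausdorff_imp_regular_space[OF cK hK] .
  have cf: "continuous_map K star_space (\<lambda>_. ())" by (simp add: star_space_def)
  have pr: "proper_map K star_space (\<lambda>_. ())"
    unfolding proper_map_def
  proof (intro conjI ballI)
    show "closed_map K star_space (\<lambda>_. ())" unfolding closed_map_def star_space_def by simp
    fix y assume "y \<in> topspace star_space"
    show "compactin K {x \<in> topspace K. () = y}" using cK unfolding compact_space_def by simp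
  qed
  show "in_P TYPE('d) K star_space (\<lambda>_. ())" using proper_in_P[OF reg hK pr cf] .
qed


end
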